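(* Let $\mu,\varepsilon,\nu,\Omega,\omega$ be real or complex parameters with $\mu\neq 0$ and $\nu\notin\{0,-1,-2,\dots\}$, and consider the grand confluent hypergeometric (GCH) equation $$x\,y''(x)+\left(\mu x^2+\varepsilon x+\nu\right)y'(x)+\left(\Omega x+\varepsilon\omega\right)y(x)=0 .$$ Put $\gamma=\tfrac12(1+\nu)$, $a=\frac{\Omega}{2\mu}$, $\tilde\varepsilon=-\tfrac12\varepsilon x$ and $z=-\tfrac12\mu x^2$, and assume $\gamma-a$ is not a nonpositive integer. Then the function $$ \begin{aligned} y(x)=QW\Big(\omega,\gamma;\tilde\varepsilon;z\Big)=\frac{\Gamma(\gamma-a)}{\Gamma(\gamma)}\Bigg\{&\sum_{i_0=0}^{\infty}\frac{(a)_{i_0}}{(1)_{i_0}(\gamma)_{i_0}}z^{i_0}\\ &+\Bigg\{\sum_{i_0=0}^{\infty}\frac{(i_0+\frac{\omega}{2})}{(i_0+\frac12)(i_0-\frac12+\gamma)}\frac{(a)_{i_0}}{(1)_{i_0}(\gamma)_{i_0}}\sum_{i_1=i_0}^{\infty}\frac{(a+\frac12)_{i_1}(\frac32)_{i_0}(\gamma+\frac12)_{i_0}}{(a+\frac12)_{i_0}(\frac32)_{i_1}(\gamma+\frac12)_{i_1}}z^{i_1}\Bigg\}\tilde\varepsilon\\ &+\sum_{n=2}^{\infty}\Bigg\{\sum_{i_0=0}^{\infty}\frac{(i_0+\frac{\omega}{2})}{(i_0+\frac12)(i_0-\frac12+\gamma)}\frac{(a)_{i_0}}{(1)_{i_0}(\gamma)_{i_0}}\\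 &\quad\times\prod_{k=1}^{n-1}\Bigg\{\sum_{i_k=i_{k-1}}^{\infty}\frac{(i_k+\frac{\omega}{2}+\frac{k}{2})}{(i_k+\frac12+\frac k2)(i_k-\frac12+\gamma+\frac k2)}\frac{(a+\frac k2)_{i_k}(1+\frac k2)_{i_{k-1}}(\frac k2+\gamma)_{i_{k-1}}}{(a+\frac k2)_{i_{k-1}}(1+\frac k2)_{i_k}(\frac k2+\gamma)_{i_k}}\Bigg\}\\ &\quad\times\sum_{i_n=i_{n-1}}^{\infty}\frac{(a+\frac n2)_{i_n}(1+\frac n2)_{i_{n-1}}(\frac n2+\gamma)_{i_{n-1}}}{(a+\frac n2)_{i_{n-1}}(1+\frac n2)_{i_n}(\frac n2+\gamma)_{i_n}}z^{i_n}\Bigg\}\tilde\varepsilon^{\,n}\Bigg\} \end{aligned} $$ is the power series expansion about $x=0$ of a solution (the solution of the first kind, corresponding to the indicial root $\lambda=0$) of the GCH equation.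
   Context: $(x)_n=\Gamma(x+n)/\Gamma(x)$ denotes the Pochhammer symbol (rising factorial), and for integers $m\ge n\ge 0$ a quotient $(b)_m/(b)_n$ is understood as $\prod_{j=n}^{m-1}(b+j)$. In the term with index $n\ge 2$, the product over $k=1,\dots,n-1$ denotes nested summation: the sum over $i_k$ runs from $i_{k-1}$ to $\infty$, with $i_{k-1}$ the summation index of the previous level, and the innermost sum over $i_n$ runs from $i_{n-1}$ to $\infty$. *)

theory Defs
  imports "HOL-Analysis.Analysis"
begin

text \<open>Quotient of Pochhammer symbols
  (a+k/2)_j (1+k/2)_i (k/2+gam)_i / ((a+k/2)_i (1+k/2)_j (k/2+gam)_j)  for i <= j,
  understood as the product over t = i, ..., j-1.\<close>
definition qwR :: "complex \<Rightarrow> complex \<Rightarrow> nat \<Rightarrow> nat \<Rightarrow> nat \<Rightarrow> complex" where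
  "qwR a gam k i j = (\<Prod>t\<in>{i..<j}.
     (a + of_nat k / 2 + of_nat t) / ((1 + of_nat k / 2 + of_nat t) * (of_nat k / 2 + gam + of_nat t)))"

text \<open>Summand factor at level k (1 <= k <= n-1), indices i_{k-1} = i, i_k = j.\<close>
definition qwG :: "complex \<Rightarrow> complex \<Rightarrow> complex \<Rightarrow> nat \<Rightarrow> nat \<Rightarrow> nat \<Rightarrow> complex" where
  "qwG a gam om k i j =
     (of_nat j + om / 2 + of_nat k / 2) /
       ((of_nat j + 1/2 + of_nat k / 2) * (of_nat j - 1/2 + gam + of_nat k / 2)) * qwR a gam k i j"

definition qwF0 :: "complex \<Rightarrow> complex \<Rightarrow> complex \<Rightarrow> nat \<Rightarrow> complex" where
  "qwF0 a gam om i =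
     (of_nat i + om / 2) / ((of_nat i + 1/2) * (of_nat i - 1/2 + gam)) *
     (pochhammer a i / (pochhammer 1 i * pochhammer gam i))"

text \<open>Summand of the inner sum at level k = n - d, with previous index i, as function of m
  (current index i + m).  Level n (d = 0) is the innermost sum carrying z^{i_n}.\<close>
fun qwLev :: "complex \<Rightarrow> complex \<Rightarrow> complex \<Rightarrow> complex \<Rightarrow> nat \<Rightarrow> nat \<Rightarrow> nat \<Rightarrow> complex"
and qwLevTerm :: "complex \<Rightarrow> complex \<Rightarrow> complex \<Rightarrow> complex \<Rightarrow> nat \<Rightarrow> nat \<Rightarrow> nat \<Rightarrow> nat \<Rightarrow> complex" where
  "qwLevTerm a gam om z 0 n i m = qwR a gam n i (i + m) * z ^ (i + m)"
| "qwLevTerm a gam om z (Suc d) n i m = qwG a gam om (n - Suc d) i (i + m) * qwLev a gam om z d n (i + m)"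
| "qwLev a gam om z d n i = (\<Sum>m. qwLevTerm a gam om z d n i m)"

definition qwOuterTerm :: "complex \<Rightarrow> complex \<Rightarrow> complex \<Rightarrow> complex \<Rightarrow> nat \<Rightarrow> nat \<Rightarrow> complex" where
  "qwOuterTerm a gam om z n i =
     (if n = 0 then pochhammer a i / (pochhammer 1 i * pochhammer gam i) * z ^ i
      else qwF0 a gam om i * qwLev a gam om z (n - 1) n i)"

definition qwCoeff :: "complex \<Rightarrow> complex \<Rightarrow> complex \<Rightarrow> complex \<Rightarrow> nat \<Rightarrow> complex" where
  "qwCoeff a gam om z n = (\<Sum>i. qwOuterTerm a gam om z n i)"

text \<open>QW(omega, gam; et; z) with a = Omega/(2 mu) as extra explicit parameter.\<close>
definition QW :: "complex \<Rightarrow> complex \<Rightarrow> complex \<Rightarrow> complex \<Rightarrow> complex \<Rightarrow> complex" where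
  "QW a om gam et z = Gamma (gam - a) / Gamma gam * (\<Sum>n. qwCoeff a gam om z n * et ^ n)"

definition QW_converges :: "complex \<Rightarrow> complex \<Rightarrow> complex \<Rightarrow> complex \<Rightarrow> complex \<Rightarrow> bool" where
  "QW_converges a om gam et z \<longleftrightarrow>
     (\<forall>n d i. d < n \<longrightarrow> summable (qwLevTerm a gam om z d n i)) \<and>
     (\<forall>n. summable (qwOuterTerm a gam om z n)) \<and>
     summable (\<lambda>n. qwCoeff a gam om z n * et ^ n)"

end

theory Submission
  imports Defs
begin


lemma geom_prod_abs_summable:
  fixes F :: "nat \<times> nat \<Rightarrow> complex"
  assumes q: "0 \<le> q" "q < 1" and bnd: "\<And>m m'. norm (F (m,m')) \<le> K * q^m * q^m'"
  shows "Infinite_Sum.abs_summable_on F UNIV"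
proof -
  have K: "K \<ge> 0" using bnd[of 0 0] norm_ge_zero[of "F (0,0)"] by (simp only: power_0 mult_1_right)
  define G where "G = (\<lambda>(m,m'). K * q^m * q^m')"
  have gs: "summable (\<lambda>n. q^n)" using q by (simp add: summable_geometric)
  have inner: "((\<lambda>y. G (x,y)) has_sum (K*q^x * suminf (\<lambda>n. q^n))) UNIV" for x
  proof -
    have "summable (\<lambda>y. norm (G (x,y)))" using gs K q
      by (auto simp: G_def abs_mult intro!: summable_mult)
    moreover have "(\<lambda>y. G (x,y)) sums (K*q^x * suminf (\<lambda>n. q^n))"
      unfolding G_def using gs by (simp add: sums_mult summable_sums)
    ultimately show ?thesis by (rule norm_summable_imp_has_sum)
  qed
  have outer: "(\<lambda>x. K*q^x * suminf (\<lambda>n. q^n)) summable_on UNIV"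
    apply (rule norm_summable_imp_summable_on)
    using gs K q suminf_nonneg[OF gs] by (auto simp: abs_mult intro!: summable_mult2 summable_mult)
  have "G summable_on Sigma UNIV (\<lambda>_. UNIV)"
    by (rule summable_on_SigmaI[OF inner outer]) (use K q in \<open>auto simp: G_def\<close>)
  hence "G summable_on UNIV" by simp
  thus ?thesis
    by (rule Infinite_Sum.abs_summable_on_comparison_test') (use bnd in \<open>auto simp: G_def\<close>)
qed

lemma double_series:
  fixes F :: "nat \<Rightarrow> nat \<Rightarrow> complex" and h :: "nat \<times> nat \<Rightarrow> nat"
  assumes q: "0 \<le> q" "q < 1" and bnd: "\<And>m m'. norm (F m m') \<le> K * q^m * q^m'"
    and fin: "\<And>N. finite (h -` {N})"
  shows "\<exists>S. (\<forall>m. summable (F m)) \<and> (\<lambda>m. suminf (F m)) sums S \<and>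
            (\<lambda>N. \<Sum>p\<in>h -` {N}. F (fst p) (snd p)) sums S"
proof -
  define G where "G = (\<lambda>p. F (fst p) (snd p))"
  have abs: "Infinite_Sum.abs_summable_on G UNIV"
    by (rule geom_prod_abs_summable[OF q]) (use bnd in \<open>auto simp: G_def\<close>)
  hence sG: "G summable_on UNIV" by (rule abs_summable_summable)
  define S where "S = infsum G UNIV"
  have hs: "(G has_sum S) UNIV" using sG by (simp add: S_def)
  have inner_sum: "summable (\<lambda>y. norm (F m y))" for m
  proof -
    have K: "K \<ge> 0" using bnd[of 0 0] norm_ge_zero[of "F 0 0"] by (simp only: power_0 mult_1_right)
    show ?thesis
      apply (rule summable_comparison_test'[where g="\<lambda>y. K*q^m*q^y"])
      using q K bnd by (auto intro!: summable_mult simp: summable_geometric)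
  qed
  have sm: "summable (F m)" for m using inner_sum summable_norm_cancel by blast
  have inner: "((\<lambda>y. G (m,y)) has_sum suminf (F m)) UNIV" for m
    using norm_summable_imp_has_sum[OF inner_sum summable_sums[OF sm]] by (simp add: G_def)
  have hs2: "(G has_sum S) (Sigma UNIV (\<lambda>_. UNIV))" using hs by simp
  have o1: "((\<lambda>m. suminf (F m)) has_sum S) UNIV"
    by (rule has_sum_Sigma'[OF hs2]) (use inner in auto)
  have bij: "bij_betw snd (Sigma UNIV (\<lambda>N. h -` {N})) UNIV"
    by (auto simp: bij_betw_def inj_on_def image_def)
  have hs3: "((\<lambda>p. G (snd p)) has_sum S) (Sigma UNIV (\<lambda>N. h -` {N}))"
    using has_sum_reindex_bij_betw[OF bij, of G S] hs by simp
  have o2: "((\<lambda>N. \<Sum>p\<in>h -` {N}. G p) has_sum S) UNIV"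
    by (rule has_sum_Sigma'[OF hs3]) (use fin in auto)
  show ?thesis
    using has_sum_imp_sums[OF o1] has_sum_imp_sums[OF o2] sm by (auto simp: G_def)
qed



lemma fiber_diag_eq: "(\<lambda>(m,m'). m+m') -` {N} = (\<lambda>m. (m, N-m)) ` {..(N::nat)}"
proof (intro set_eqI iffI)
  fix p assume "p \<in> (\<lambda>(m,m'). m+m') -` {N}"
  then show "p \<in> (\<lambda>m. (m, N-m)) ` {..N}" by (cases p) (auto simp: image_def)
qed auto

lemma fiber_diag_fin: "finite ((\<lambda>(m::nat,m'). m+m') -` {N})"
  unfolding fiber_diag_eq by simp

lemma fiber_diag_sum: "(\<Sum>p\<in>(\<lambda>(m,m'). m+m') -` {N::nat}. F (fst p) (snd p)) = (\<Sum>m\<le>N. F m (N-m))"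
  unfolding fiber_diag_eq by (subst sum.reindex) (auto simp: inj_on_def)

lemma fiber2_eq: "(\<lambda>(n,j). n+2*j) -` {N} = (\<lambda>j. (N-2*j, j)) ` {j. j \<le> N \<and> 2*j \<le> (N::nat)}"
proof (intro set_eqI iffI)
  fix p assume "p \<in> (\<lambda>(n,j). n+2*j) -` {N}"
  then show "p \<in> (\<lambda>j. (N-2*j, j)) ` {j. j \<le> N \<and> 2*j \<le> N}" by (cases p) (auto simp: image_def)
qed auto

lemma fiber2_fin: "finite ((\<lambda>(n::nat,j). n+2*j) -` {N})"
  unfolding fiber2_eq by simp

lemma fiber2_sum: "(\<Sum>p\<in>(\<lambda>(n,j). n+2*j) -` {N::nat}. F (fst p) (snd p)) =
   (\<Sum>j\<le>N. if 2*j \<le> N then F (N-2*j) j else 0)"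
proof -
  have "(\<Sum>p\<in>(\<lambda>(n,j). n+2*j) -` {N::nat}. F (fst p) (snd p)) = (\<Sum>j\<in>{j. j \<le> N \<and> 2*j \<le> N}. F (N-2*j) j)"
    unfolding fiber2_eq by (subst sum.reindex) (auto simp: inj_on_def)
  also have "\<dots> = (\<Sum>j\<in>{..N}. if 2*j \<le> N then F (N-2*j) j else 0)"
    by (subst sum.inter_filter[symmetric]) (auto intro!: sum.cong)
  finally show ?thesis .
qed

lemma tri_swap: "(\<Sum>l=i..j. \<Sum>l'=l..j. f l l') = (\<Sum>l'=i..j. \<Sum>l=i..l'. f l (l'::nat))"
proof -
  have "(\<Sum>l=i..j. \<Sum>l'=l..j. f l l') = (\<Sum>l\<in>{i..j}. \<Sum>l'\<in>{l'\<in>{i..j}. l \<le> l'}. f l l')"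
    by (intro sum.cong) auto
  also have "\<dots> = (\<Sum>l'\<in>{i..j}. \<Sum>l\<in>{l\<in>{i..j}. l \<le> l'}. f l l')"
    by (rule sum.swap_restrict) auto
  also have "\<dots> = (\<Sum>l'=i..j. \<Sum>l=i..l'. f l l')"
    by (intro sum.cong) auto
  finally show ?thesis .
qed

lemma tri_swap0: "(\<Sum>l\<le>j. \<Sum>l'=l..j. f l l') = (\<Sum>l'\<le>j. \<Sum>l\<le>l'. f l (l'::nat))"
  using tri_swap[where i=0 and j=j and f=f] by (simp only: atLeast0AtMost)



definition gF :: "complex \<Rightarrow> complex \<Rightarrow> nat \<Rightarrow> nat \<Rightarrow> complex" where
  "gF gam om k j = (of_nat j + om / 2 + of_nat k / 2) /
       ((of_nat j + 1/2 + of_nat k / 2) * (of_nat j - 1/2 + gam + of_nat k / 2))"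

definition rho :: "complex \<Rightarrow> complex \<Rightarrow> nat \<Rightarrow> nat \<Rightarrow> complex" where
  "rho a gam k t = (a + of_nat k / 2 + of_nat t) / ((1 + of_nat k / 2 + of_nat t) * (of_nat k / 2 + gam + of_nat t))"

lemma qwG_eq: "qwG a gam om k i j = gF gam om k j * qwR a gam k i j"
  by (simp add: qwG_def gF_def)

lemma qwR_same[simp]: "qwR a gam k i i = 1"
  by (simp add: qwR_def)

lemma qwR_Suc: "i \<le> j \<Longrightarrow> qwR a gam k i (Suc j) = qwR a gam k i j * rho a gam k j"
  by (simp add: qwR_def rho_def prod.atLeastLessThan_Suc)

fun LL :: "complex \<Rightarrow> complex \<Rightarrow> complex \<Rightarrow> nat \<Rightarrow> nat \<Rightarrow> nat \<Rightarrow> nat \<Rightarrow> complex" where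
  "LL a gam om 0 n i j = qwR a gam n i j"
| "LL a gam om (Suc d) n i j = (\<Sum>l=i..j. qwG a gam om (n - Suc d) i l * LL a gam om d n l j)"

fun bb :: "complex \<Rightarrow> complex \<Rightarrow> complex \<Rightarrow> nat \<Rightarrow> nat \<Rightarrow> complex" where
  "bb a gam om 0 j = pochhammer a j / (pochhammer 1 j * pochhammer gam j)"
| "bb a gam om (Suc n) j = (\<Sum>l\<le>j. bb a gam om n l * gF gam om n l * qwR a gam (Suc n) l j)"

lemma LL_rec: "LL a gam om (Suc d) (Suc n) i j =
   (\<Sum>l=i..j. LL a gam om d n i l * gF gam om n l * qwR a gam (Suc n) l j)"
proof (induction d arbitrary: i j)
  case 0
  then show ?case by (simp add: qwG_eq mult_ac)
next
  case (Suc d)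
  have "LL a gam om (Suc (Suc d)) (Suc n) i j =
     (\<Sum>l=i..j. qwG a gam om (n - Suc d) i l * LL a gam om (Suc d) (Suc n) l j)"
    by simp
  also have "\<dots> = (\<Sum>l=i..j. \<Sum>l'=l..j. qwG a gam om (n - Suc d) i l *
       (LL a gam om d n l l' * gF gam om n l' * qwR a gam (Suc n) l' j))"
    by (simp only: Suc.IH sum_distrib_left)
  also have "\<dots> = (\<Sum>l'=i..j. \<Sum>l=i..l'. qwG a gam om (n - Suc d) i l *
       (LL a gam om d n l l' * gF gam om n l' * qwR a gam (Suc n) l' j))"
    by (rule tri_swap)
  also have "\<dots> = (\<Sum>l'=i..j. LL a gam om (Suc d) n i l' * gF gam om n l' * qwR a gam (Suc n) l' j)"
    by (intro sum.cong refl) (simp add: sum_distrib_left sum_distrib_right mult_ac)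
  finally show ?case .
qed

lemma F0_eq: "qwF0 a gam om i = gF gam om 0 i * bb a gam om 0 i"
  by (simp add: qwF0_def gF_def)

lemma bb_F0: "bb a gam om (Suc n) p = (\<Sum>i\<le>p. qwF0 a gam om i * LL a gam om n (Suc n) i p)"
proof (induction n arbitrary: p)
  case 0
  then show ?case by (simp add: F0_eq mult_ac)
next
  case (Suc n)
  have "(\<Sum>i\<le>p. qwF0 a gam om i * LL a gam om (Suc n) (Suc (Suc n)) i p) =
     (\<Sum>i\<le>p. \<Sum>l=i..p. qwF0 a gam om i * (LL a gam om n (Suc n) i l * gF gam om (Suc n) l * qwR a gam (Suc (Suc n)) l p))"
    by (simp only: LL_rec sum_distrib_left)
  also have "\<dots> = (\<Sum>l\<le>p. \<Sum>i\<le>l. qwF0 a gam om i * (LL a gam om n (Suc n) i l * gF gam om (Suc n) l * qwR a gam (Suc (Suc n)) l p))"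
    by (rule tri_swap0)
  also have "\<dots> = (\<Sum>l\<le>p. (\<Sum>i\<le>l. qwF0 a gam om i * LL a gam om n (Suc n) i l) * (gF gam om (Suc n) l * qwR a gam (Suc (Suc n)) l p))"
    by (intro sum.cong refl) (simp add: sum_distrib_left sum_distrib_right mult_ac)
  also have "\<dots> = (\<Sum>l\<le>p. bb a gam om (Suc n) l * gF gam om (Suc n) l * qwR a gam (Suc (Suc n)) l p)"
    by (simp only: Suc.IH mult.assoc)
  finally show ?case by simp
qed

lemma bb_0_Suc: "bb a gam om 0 (Suc j) = rho a gam 0 j * bb a gam om 0 j"
  by (simp add: rho_def pochhammer_Suc times_divide_times_eq mult_ac add_ac)

lemma bb_Suc_0: "bb a gam om (Suc n) 0 = gF gam om n 0 * bb a gam om n 0"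
  by simp

lemma bb_Suc_Suc: "bb a gam om (Suc n) (Suc j) =
   gF gam om n (Suc j) * bb a gam om n (Suc j) + rho a gam (Suc n) j * bb a gam om (Suc n) j"
proof -
  have "bb a gam om (Suc n) (Suc j) = (\<Sum>l\<le>j. bb a gam om n l * gF gam om n l * qwR a gam (Suc n) l (Suc j))
        + bb a gam om n (Suc j) * gF gam om n (Suc j)"
    by simp
  also have "(\<Sum>l\<le>j. bb a gam om n l * gF gam om n l * qwR a gam (Suc n) l (Suc j)) =
     rho a gam (Suc n) j * bb a gam om (Suc n) j"
    unfolding bb.simps sum_distrib_left by (intro sum.cong refl) (simp add: qwR_Suc mult_ac)
  finally show ?thesis by (simp add: mult_ac)
qed



lemma bb_key:
  assumes nj: "1 \<le> n + 2*j" and D: "of_nat j + of_nat n / 2 + gam - 1 \<noteq> (0::complex)"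
  shows "4*(of_nat j + of_nat n/2)*(of_nat j + of_nat n/2 + gam - 1) * bb a gam om n j =
   (if n = 0 then 0 else 4*(of_nat j + (of_nat n - 1)/2 + om/2) * bb a gam om (n-1) j) +
   (if j = 0 then 0 else 4*(a + of_nat n/2 + of_nat j - 1) * bb a gam om n (j-1))"
proof (cases n)
  case 0
  then obtain j' where j: "j = Suc j'" using nj by (cases j) auto
  have D': "gam + of_nat j' \<noteq> 0" using D 0 j by (simp add: algebra_simps)
  have D1: "1 + of_nat j' \<noteq> (0::complex)" by (metis of_nat_Suc of_nat_eq_0_iff nat.distinct(1) add.commute)
  have e: "bb a gam om 0 j = rho a gam 0 j' * bb a gam om 0 j'" by (simp only: j bb_0_Suc)
  have alg: "4*(of_nat (Suc j'))*(of_nat (Suc j') + gam - 1) * (rho a gam 0 j' * X) = 4*(a + of_nat (Suc j') - 1) * X" for X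
  proof -
    have r: "(1 + of_nat j') * (gam + of_nat j') * rho a gam 0 j' = a + of_nat j'"
      using D' D1 by (simp add: rho_def)
    have "4*(of_nat (Suc j'))*(of_nat (Suc j') + gam - 1) * (rho a gam 0 j' * X) =
          4*((1 + of_nat j') * (gam + of_nat j') * rho a gam 0 j') * X"
      by (simp add: algebra_simps)
    also have "\<dots> = 4*(a + of_nat (Suc j') - 1) * X" by (simp only: r) (simp add: algebra_simps)
    finally show ?thesis .
  qed
  show ?thesis using 0 j e alg[of "bb a gam om 0 j'"] by (simp del: bb.simps)
next
  case (Suc n')
  note n = Suc
  show ?thesis
  proof (cases j)
    case 0
    have D': "of_nat n' / 2 + gam - 1/2 \<noteq> 0"
    proof -
      have "of_nat j + of_nat n/2 + gam - 1 = (of_nat n'/2 + gam - 1/2 :: complex)"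
        using n 0 by (simp add: field_simps)
      thus ?thesis using D by (simp only:) simp
    qed
    have D2: "(of_nat n' + 1) / 2 \<noteq> (0::complex)"
      by (metis divide_eq_0_iff of_nat_Suc of_nat_eq_0_iff nat.distinct(1) add.commute zero_neq_numeral)
    have e: "bb a gam om n j = gF gam om n' 0 * bb a gam om n' 0" by (simp only: n 0 bb_Suc_0)
    have alg: "4*(of_nat (Suc n')/2)*(of_nat (Suc n')/2 + gam - 1) * (gF gam om n' 0 * X) = 4*((of_nat (Suc n') - 1)/2 + om/2) * X" for X
    proof -
      have gf: "gF gam om n' 0 = (om/2 + of_nat n'/2) / ((1/2 + of_nat n'/2) * (of_nat n'/2 + gam - 1/2))"
        by (simp add: gF_def algebra_simps)
      have D3: "1/2 + of_nat n'/2 \<noteq> (0::complex)" using D2 by (simp add: add_divide_distrib add.commute)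
      have r0: "((1/2 + of_nat n'/2) * (of_nat n' / 2 + gam - 1/2)) * gF gam om n' 0 = om/2 + of_nat n'/2"
        unfolding gf using D' D3 by simp
      have r: "((of_nat n' + 1) / 2) * (of_nat n' / 2 + gam - 1/2) * gF gam om n' 0 = om/2 + of_nat n'/2"
        using r0 by (simp add: add_divide_distrib add.commute)
      have "4*(of_nat (Suc n')/2)*(of_nat (Suc n')/2 + gam - 1) * (gF gam om n' 0 * X) =
            4*(((of_nat n' + 1) / 2) * (of_nat n' / 2 + gam - 1/2) * gF gam om n' 0) * X"
        by (simp add: field_simps)
      also have "\<dots> = 4*((of_nat (Suc n') - 1)/2 + om/2) * X" by (simp only: r) (simp add: algebra_simps)
      finally show ?thesis .
    qed
    show ?thesis using n 0 e alg[of "bb a gam om n' 0"] by (simp del: bb.simps)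
  next
    case (Suc j')
    note j = Suc
    define s where "s = of_nat j + of_nat n / (2::complex)"
    have s1: "s \<noteq> 0"
    proof -
      have "Re s > 0" using j by (simp add: s_def)
      thus ?thesis by auto
    qed
    have s2: "s + gam - 1 \<noteq> 0" using D by (simp add: s_def)
    have g1: "of_nat (Suc j') + 1/2 + of_nat n' / 2 = s" by (simp add: s_def n j field_simps)
    have g2: "of_nat (Suc j') - 1/2 + gam + of_nat n' / 2 = s + gam - 1" by (simp add: s_def n j field_simps)
    have r1: "1 + of_nat (Suc n') / 2 + of_nat j' = s" by (simp add: s_def n j field_simps)
    have r2: "of_nat (Suc n') / 2 + gam + of_nat j' = s + gam - 1" by (simp add: s_def n j field_simps)
    have "4 * s * (s + gam - 1) * bb a gam om n j =
       4 * s * (s + gam - 1) * (gF gam om n' (Suc j') * bb a gam om n' (Suc j') + rho a gam (Suc n') j' * bb a gam om (Suc n') j')"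
      by (simp add: n j bb_Suc_Suc del: bb.simps)
    also have "\<dots> = 4*(of_nat (Suc j') + om/2 + of_nat n'/2) * bb a gam om n' (Suc j') +
        4*(a + of_nat (Suc n')/2 + of_nat j') * bb a gam om (Suc n') j'"
    proof -
      have e1: "s * (s + gam - 1) * gF gam om n' (Suc j') = of_nat (Suc j') + om/2 + of_nat n'/2"
        unfolding gF_def g1 g2 using s1 s2 by simp
      have e2: "s * (s + gam - 1) * rho a gam (Suc n') j' = a + of_nat (Suc n')/2 + of_nat j'"
        unfolding rho_def r1 r2 using s1 s2 by simp
      have "4 * s * (s + gam - 1) * (gF gam om n' (Suc j') * X + rho a gam (Suc n') j' * Y) =
         4 * (s * (s + gam - 1) * gF gam om n' (Suc j')) * X + 4 * (s * (s + gam - 1) * rho a gam (Suc n') j') * Y" for X Y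
        by (simp add: algebra_simps)
      from this[of "bb a gam om n' (Suc j')" "bb a gam om (Suc n') j'"] show ?thesis
        by (simp only: e1 e2)
    qed
    finally show ?thesis using n j by (simp add: s_def algebra_simps del: bb.simps)
  qed
qed



lemma bb_key2:
  assumes nj: "1 \<le> n + 2*j" and D: "of_nat j + of_nat n / 2 + gam - 1 \<noteq> (0::complex)"
  shows "(of_nat n + 2* of_nat j)*(of_nat n + 2* of_nat j + 2*gam - 2) * bb a gam om n j =
   (if n = 0 then 0 else 2*(2* of_nat j + of_nat n - 1 + om) * bb a gam om (n-1) j) +
   (if j = 0 then 0 else 2*(2*a + of_nat n + 2* of_nat j - 2) * bb a gam om n (j-1))"
proof -
  have "(of_nat n + 2* of_nat j)*(of_nat n + 2* of_nat j + 2*gam - 2) =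
        4*(of_nat j + of_nat n/2)*(of_nat j + of_nat n/2 + gam - (1::complex))"
    by (simp add: field_simps)
  moreover have "2*(2* of_nat j + of_nat n - 1 + om) = 4*(of_nat j + (of_nat n - 1)/2 + om/(2::complex))"
    by (simp add: field_simps)
  moreover have "2*(2*a + of_nat n + 2* of_nat j - 2) = 4*(a + of_nat n/2 + of_nat j - (1::complex))"
    by (simp add: field_simps)
  ultimately show ?thesis using bb_key[OF assms, of a om] by simp
qed

definition dd :: "complex \<Rightarrow> complex \<Rightarrow> complex \<Rightarrow> complex \<Rightarrow> complex \<Rightarrow> nat \<Rightarrow> complex" where
  "dd a gam om be al N = (\<Sum>j\<le>N. if 2*j \<le> N then bb a gam om (N-2*j) j * be^(N-2*j) * al^j else 0)"

lemma term_zero: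
  assumes j: "2*j \<le> Suc N"
    and D: "of_nat j + of_nat (Suc N - 2*j) / 2 + gam - 1 \<noteq> (0::complex)"
  shows "of_nat (Suc N) * (of_nat N + 2*gam - 1) * (bb a gam om (Suc N - 2*j) j * be^(Suc N - 2*j) * al^j)
    + (if 2*j \<le> N then (-2*be)*(of_nat N + om) * (bb a gam om (N - 2*j) j * be^(N - 2*j) * al^j) else 0)
    + (if j = 0 then 0 else (-2*al)*(of_nat N - 1 + 2*a) * (bb a gam om (Suc N - 2*j) (j-1) * be^(Suc N - 2*j) * al^(j-1))) = 0"
proof -
  define n where "n = Suc N - 2*j"
  have nN: "Suc N = n + 2*j" using j by (simp add: n_def)
  have hN: "of_nat N = of_nat n + 2* of_nat j - (1::complex)"
  proof -
    have "of_nat (Suc N) = (of_nat (n + 2*j) :: complex)" using nN by simp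
    thus ?thesis by (simp add: algebra_simps)
  qed
  have K: "(of_nat n + 2* of_nat j)*(of_nat n + 2* of_nat j + 2*gam - 2) * bb a gam om n j =
   (if n = 0 then 0 else 2*(2* of_nat j + of_nat n - 1 + om) * bb a gam om (n-1) j) +
   (if j = 0 then 0 else 2*(2*a + of_nat n + 2* of_nat j - 2) * bb a gam om n (j-1))"
    by (rule bb_key2) (use nN D n_def in auto)
  have c2: "(2*j \<le> N) = (n \<noteq> 0)" using nN by auto
  have c3: "N - 2*j = n - 1" using nN by auto
  define X where "X = bb a gam om n j"
  define Y where "Y = bb a gam om (n-1) j"
  define Z where "Z = bb a gam om n (j-1)"
  have K': "(of_nat n + 2* of_nat j)*(of_nat n + 2* of_nat j + 2*gam - 2) * X =
   (if n = 0 then 0 else 2*(2* of_nat j + of_nat n - 1 + om) * Y) +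
   (if j = 0 then 0 else 2*(2*a + of_nat n + 2* of_nat j - 2) * Z)"
    using K by (simp add: X_def Y_def Z_def)
  have K'': "of_nat (Suc N) * (of_nat N + 2*gam - 1) * X =
   (if n = 0 then 0 else 2*(2* of_nat j + of_nat n - 1 + om) * Y) +
   (if j = 0 then 0 else 2*(2*a + of_nat n + 2* of_nat j - 2) * Z)"
    using K' by (simp add: hN algebra_simps)
  have e1: "of_nat (Suc N) * (of_nat N + 2*gam - 1) * (X * be^n * al^j) =
     be^n*al^j*(of_nat (Suc N) * (of_nat N + 2*gam - 1) * X)" by (simp add: algebra_simps)
  have e2: "(if n \<noteq> 0 then (-2*be)*(of_nat N + om)*(Y * be^(n-1) * al^j) else 0) =
     be^n*al^j*(-(if n = 0 then 0 else 2*(2* of_nat j + of_nat n - 1 + om) * Y))"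
    by (cases n) (simp_all add: hN algebra_simps)
  have e3: "(if j = 0 then 0 else (-2*al)*(of_nat N - 1 + 2*a) * (Z * be^n * al^(j-1))) =
     be^n*al^j*(-(if j = 0 then 0 else 2*(2*a + of_nat n + 2* of_nat j - 2) * Z))"
    by (cases j) (simp_all add: hN algebra_simps)
  show ?thesis unfolding n_def[symmetric] c2 c3 X_def[symmetric] Y_def[symmetric] Z_def[symmetric]
    unfolding e1 e2 e3 K'' by (simp add: algebra_simps)
qed



lemma dd_rec:
  assumes D: "\<And>n j. 1 \<le> n + 2*j \<Longrightarrow> of_nat j + of_nat n / 2 + gam - 1 \<noteq> (0::complex)"
  shows "of_nat (Suc N) * (of_nat N + 2*gam - 1) * dd a gam om be al (Suc N)
    + (-2*be)*(of_nat N + om) * dd a gam om be al N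
    + (if N = 0 then 0 else (-2*al)*(of_nat N - 1 + 2*a) * dd a gam om be al (N-1)) = 0"
proof -
  define f1 where "f1 j = (if 2*j \<le> Suc N then of_nat (Suc N) * (of_nat N + 2*gam - 1) * (bb a gam om (Suc N - 2*j) j * be^(Suc N - 2*j) * al^j) else 0)" for j
  define f2 where "f2 j = (if 2*j \<le> Suc N then (if 2*j \<le> N then (-2*be)*(of_nat N + om) * (bb a gam om (N - 2*j) j * be^(N - 2*j) * al^j) else 0) else 0)" for j
  define f3 where "f3 j = (if 2*j \<le> Suc N then (if j = 0 then 0 else (-2*al)*(of_nat N - 1 + 2*a) * (bb a gam om (Suc N - 2*j) (j-1) * be^(Suc N - 2*j) * al^(j-1))) else 0)" for j
  have z: "f1 j + f2 j + f3 j = 0" for j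
  proof (cases "2*j \<le> Suc N")
    case True
    have "1 \<le> (Suc N - 2*j) + 2*j" using True by simp
    from term_zero[OF True D[OF this]] show ?thesis using True by (simp add: f1_def f2_def f3_def)
  qed (simp add: f1_def f2_def f3_def)
  have "(\<Sum>j\<le>Suc N. f1 j) + (\<Sum>j\<le>Suc N. f2 j) + (\<Sum>j\<le>Suc N. f3 j) = 0"
    using z by (simp only: sum.distrib[symmetric] sum.neutral_const)
  moreover have "(\<Sum>j\<le>Suc N. f1 j) = of_nat (Suc N) * (of_nat N + 2*gam - 1) * dd a gam om be al (Suc N)"
    unfolding dd_def sum_distrib_left by (intro sum.cong refl) (simp add: f1_def)
  moreover have "(\<Sum>j\<le>Suc N. f2 j) = (-2*be)*(of_nat N + om) * dd a gam om be al N"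
  proof -
    have "(\<Sum>j\<le>Suc N. f2 j) = (\<Sum>j\<le>N. f2 j)" by (simp add: f2_def)
    also have "\<dots> = (-2*be)*(of_nat N + om) * dd a gam om be al N"
      unfolding dd_def sum_distrib_left by (intro sum.cong refl) (simp add: f2_def)
    finally show ?thesis .
  qed
  moreover have "(\<Sum>j\<le>Suc N. f3 j) = (if N = 0 then 0 else (-2*al)*(of_nat N - 1 + 2*a) * dd a gam om be al (N-1))"
  proof (cases N)
    case 0
    then show ?thesis by (simp add: f3_def)
  next
    case (Suc M)
    have "(\<Sum>j\<le>Suc N. f3 j) = f3 0 + (\<Sum>j\<le>N. f3 (Suc j))" by (rule sum.atMost_Suc_shift)
    also have "\<dots> = (\<Sum>j\<le>M. f3 (Suc j))" using Suc by (simp add: f3_def)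
    also have "\<dots> = (-2*al)*(of_nat N - 1 + 2*a) * dd a gam om be al M"
      unfolding dd_def sum_distrib_left using Suc by (intro sum.cong refl) (auto simp: f3_def)
    finally show ?thesis using Suc by simp
  qed
  ultimately show ?thesis by simp
qed



lemma half_geo_sum: "(\<Sum>k=0..m. (1/2::real)^k) \<le> 2"
proof -
  have "(\<Sum>k=0..m. (1/2::real)^k) = 2 - (1/2)^m"
    by (induction m) (auto simp: field_simps)
  thus ?thesis by simp
qed

lemma geo1:
  fixes A :: real assumes "A \<ge> 0" "i \<le> j"
  shows "(\<Sum>l=i..j. A^(l-i) * (2*A)^(j-l)) \<le> 2*(2*A)^(j-i)"
proof -
  have t: "A^(l-i) * (2*A)^(j-l) = (2*A)^(j-i) * (1/2)^(l-i)" if "i \<le> l" "l \<le> j" for l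
  proof -
    have "j - i = (l - i) + (j - l)" using that by simp
    hence "(2*A)^(j-i) = (2*A)^(l-i) * (2*A)^(j-l)" by (simp add: power_add)
    thus ?thesis by (simp add: power_mult_distrib field_simps)
  qed
  have "(\<Sum>l=i..j. A^(l-i) * (2*A)^(j-l)) = (\<Sum>l=i..j. (2*A)^(j-i) * (1/2)^(l-i))"
    by (intro sum.cong refl) (use t in auto)
  also have "\<dots> = (2*A)^(j-i) * (\<Sum>l=i..j. (1/2::real)^(l-i))" by (simp add: sum_distrib_left)
  also have "(\<Sum>l=i..j. (1/2::real)^(l-i)) = (\<Sum>k=0..j-i. (1/2::real)^k)"
  proof -
    have "{i..j} = {0+i..(j-i)+i}" using assms by simp
    hence "(\<Sum>l=i..j. (1/2::real)^(l-i)) = (\<Sum>k=0..j-i. (1/2::real)^(k+i-i))"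
      by (simp only: sum.shift_bounds_cl_nat_ivl)
    thus ?thesis by simp
  qed
  also have "(2*A)^(j-i) * \<dots> \<le> (2*A)^(j-i) * 2"
    by (rule mult_left_mono[OF half_geo_sum]) (use assms in simp)
  finally show ?thesis by simp
qed

lemma geo2:
  fixes A :: real assumes "A \<ge> 0"
  shows "(\<Sum>l\<le>j. (2*A)^l * A^(j-l)) \<le> 2*(2*A)^j"
proof -
  have "(\<Sum>l\<le>j. (2*A)^l * A^(j-l)) = (\<Sum>l=0..j. (2*A)^(j-(j-l)) * A^(j-l))"
    by (intro sum.cong) auto
  also have "\<dots> = (\<Sum>l=0..j. (2*A)^(j-l) * A^(l-0))"
    by (subst sum.atLeastAtMost_rev) (intro sum.cong refl, auto)
  also have "\<dots> = (\<Sum>l=0..j. A^(l-0) * (2*A)^(j-l))" by (simp add: mult.commute)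
  also have "\<dots> \<le> 2*(2*A)^(j-0)" by (rule geo1) (use assms in auto)
  finally show ?thesis by simp
qed

lemma rho_bnd:
  assumes d: "\<delta> > 0" and hd: "\<And>m. \<delta> \<le> norm (gam + (of_nat m - 1)/2)"
  shows "norm (rho a gam k t) \<le> (norm a + 1)/\<delta>"
proof -
  define s where "s = real k/2 + real t"
  have s0: "s \<ge> 0" by (simp add: s_def)
  have n1: "norm (a + of_nat k/2 + of_nat t) \<le> norm a + s"
  proof -
    have e: "a + of_nat k/2 + of_nat t = a + of_real s" by (simp add: s_def)
    show ?thesis unfolding e using norm_triangle_ineq[of a "of_real s"] s0 by simp
  qed
  have n2: "norm (1 + of_nat k/2 + of_nat t :: complex) = 1 + s"
  proof -
    have e: "(1 + of_nat k/2 + of_nat t :: complex) = of_real (1 + s)" by (simp add: s_def)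
    show ?thesis unfolding e using s0 by (simp only: norm_of_real abs_of_nonneg)
  qed
  have n3: "norm (of_nat k/2 + gam + of_nat t) \<ge> \<delta>"
  proof -
    have e: "of_nat k/2 + gam + of_nat t = gam + (of_nat (k + 2*t + 1) - 1)/2"
      by (simp add: field_simps)
    show ?thesis unfolding e by (rule hd)
  qed
  have "norm (rho a gam k t) = norm (a + of_nat k/2 + of_nat t) / ((1 + s) * norm (of_nat k/2 + gam + of_nat t))"
    by (simp add: rho_def norm_divide norm_mult n2)
  also have "\<dots> \<le> (norm a + s) / ((1 + s) * \<delta>)"
    by (rule frac_le) (use n1 n3 s0 d in \<open>auto intro!: mult_left_mono\<close>)
  also have "\<dots> \<le> (norm a + 1)/\<delta>"
  proof -
    have h: "norm a + s \<le> (norm a + 1) * (1 + s)"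
    proof -
      have "(norm a + 1)*(1 + s) = norm a * s + norm a + s + 1" by (simp add: algebra_simps)
      thus ?thesis using mult_nonneg_nonneg[OF norm_ge_zero[of a] s0] by linarith
    qed
    have "(norm a + s) / (1 + s) \<le> norm a + 1" using h s0 by (simp add: pos_divide_le_eq)
    hence "((norm a + s) / (1 + s)) / \<delta> \<le> (norm a + 1) / \<delta>" by (rule divide_right_mono) (use d in auto)
    thus ?thesis by simp
  qed
  finally show ?thesis .
qed

lemma gF_bnd:
  assumes d: "\<delta> > 0" and hd: "\<And>m. \<delta> \<le> norm (gam + (of_nat m - 1)/2)"
  shows "norm (gF gam om k j) \<le> (norm om + 1)/\<delta>"
proof -
  define s where "s = real j + real k/2"
  have s0: "s \<ge> 0" by (simp add: s_def)
  have n1: "norm (of_nat j + om/2 + of_nat k/2) \<le> s + norm om/2"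
  proof -
    have e: "of_nat j + om/2 + of_nat k/2 = of_real s + om/2" by (simp add: s_def)
    show ?thesis unfolding e using norm_triangle_ineq[of "of_real s" "om/2"] s0 by (simp add: norm_divide)
  qed
  have n2: "norm (of_nat j + 1/2 + of_nat k/2 :: complex) = s + 1/2"
  proof -
    have e: "(of_nat j + 1/2 + of_nat k/2 :: complex) = of_real (s + 1/2)" by (simp add: s_def)
    show ?thesis unfolding e using s0 by (simp only: norm_of_real abs_of_nonneg)
  qed
  have n3: "norm (of_nat j - 1/2 + gam + of_nat k/2) \<ge> \<delta>"
  proof -
    have e: "of_nat j - 1/2 + gam + of_nat k/2 = gam + (of_nat (2*j + k) - 1)/2"
      by (simp add: field_simps)
    show ?thesis unfolding e by (rule hd)
  qed
  have "norm (gF gam om k j) = norm (of_nat j + om/2 + of_nat k/2) / ((s + 1/2) * norm (of_nat j - 1/2 + gam + of_nat k/2))"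
    by (simp add: gF_def norm_divide norm_mult n2)
  also have "\<dots> \<le> (s + norm om/2) / ((s + 1/2) * \<delta>)"
    by (rule frac_le) (use n1 n3 s0 d in \<open>auto intro!: mult_left_mono\<close>)
  also have "\<dots> \<le> (norm om + 1)/\<delta>"
  proof -
    have h: "s + norm om/2 \<le> (norm om + 1) * (s + 1/2)"
    proof -
      have "(norm om + 1)*(s+1/2) = norm om * s + norm om/2 + s + 1/2" by (simp add: algebra_simps)
      thus ?thesis using mult_nonneg_nonneg[OF norm_ge_zero[of om] s0] by linarith
    qed
    have "(s + norm om/2) / (s + 1/2) \<le> norm om + 1" using h s0 by (simp add: pos_divide_le_eq)
    hence "((s + norm om/2) / (s + 1/2)) / \<delta> \<le> (norm om + 1) / \<delta>" by (rule divide_right_mono) (use d in auto)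
    thus ?thesis by simp
  qed
  finally show ?thesis .
qed



lemma qwR_prod: "qwR a gam k i j = (\<Prod>t\<in>{i..<j}. rho a gam k t)"
  by (simp add: qwR_def rho_def)

lemma qwR_bnd:
  assumes rA: "\<And>k t. norm (rho a gam k t) \<le> A"
  shows "norm (qwR a gam k i j) \<le> A^(j-i)"
proof -
  have "norm (qwR a gam k i j) = (\<Prod>t\<in>{i..<j}. norm (rho a gam k t))"
    by (simp add: qwR_prod prod_norm)
  also have "\<dots> \<le> (\<Prod>t\<in>{i..<j}. A)" by (rule prod_mono) (use rA in auto)
  finally show ?thesis by simp
qed

lemma bb0_bnd:
  assumes rA: "\<And>k t. norm (rho a gam k t) \<le> A" and A0: "A \<ge> 0"
  shows "norm (bb a gam om 0 j) \<le> A^j"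
proof (induction j)
  case 0 then show ?case by simp
next
  case (Suc j)
  have "norm (bb a gam om 0 (Suc j)) = norm (rho a gam 0 j) * norm (bb a gam om 0 j)"
    by (simp only: bb_0_Suc norm_mult)
  also have "\<dots> \<le> A * A^j" by (rule mult_mono) (use rA Suc A0 in auto)
  finally show ?case by simp
qed

lemma F0_bnd:
  assumes rA: "\<And>k t. norm (rho a gam k t) \<le> A" and A0: "A \<ge> 0"
    and gB: "\<And>k j. norm (gF gam om k j) \<le> B"
  shows "norm (qwF0 a gam om i) \<le> B * A^i"
  unfolding F0_eq norm_mult by (rule mult_mono) (use gB bb0_bnd[OF rA A0] A0 order_trans[OF norm_ge_zero gB] in \<open>auto simp del: bb.simps\<close>)

lemma qwG_bnd:
  assumes rA: "\<And>k t. norm (rho a gam k t) \<le> A" and A0: "A \<ge> 0"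
    and gB: "\<And>k j. norm (gF gam om k j) \<le> B"
  shows "norm (qwG a gam om k i l) \<le> B * A^(l-i)"
  unfolding qwG_eq norm_mult by (rule mult_mono) (use gB qwR_bnd[OF rA] A0 order_trans[OF norm_ge_zero gB] in auto)

lemma LL_bnd:
  assumes rA: "\<And>k t. norm (rho a gam k t) \<le> A" and A0: "A \<ge> 0"
    and gB: "\<And>k j. norm (gF gam om k j) \<le> B" and B0: "B \<ge> 0"
  shows "i \<le> j \<Longrightarrow> norm (LL a gam om d n i j) \<le> (2*B)^d * (2*A)^(j-i)"
proof (induction d arbitrary: i)
  case 0
  have "norm (qwR a gam n i j) \<le> A^(j-i)" by (rule qwR_bnd[OF rA])
  also have "\<dots> \<le> (2*A)^(j-i)" by (rule power_mono) (use A0 in auto)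
  finally show ?case by simp
next
  case (Suc d)
  have "norm (LL a gam om (Suc d) n i j) \<le> (\<Sum>l=i..j. norm (qwG a gam om (n - Suc d) i l * LL a gam om d n l j))"
    by (simp only: LL.simps norm_sum)
  also have "\<dots> \<le> (\<Sum>l=i..j. (B * A^(l-i)) * ((2*B)^d * (2*A)^(j-l)))"
    unfolding norm_mult
    by (intro sum_mono mult_mono qwG_bnd[OF rA A0 gB] Suc.IH) (use A0 B0 in auto)
  also have "\<dots> = B * (2*B)^d * (\<Sum>l=i..j. A^(l-i) * (2*A)^(j-l))"
    by (simp add: sum_distrib_left mult_ac)
  also have "\<dots> \<le> B * (2*B)^d * (2*(2*A)^(j-i))"
    by (rule mult_left_mono[OF geo1]) (use A0 B0 Suc.prems in auto)
  also have "\<dots> = (2*B)^(Suc d) * (2*A)^(j-i)" by (simp add: mult_ac)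
  finally show ?case .
qed

lemma bb_bnd:
  assumes rA: "\<And>k t. norm (rho a gam k t) \<le> A" and A0: "A \<ge> 0"
    and gB: "\<And>k j. norm (gF gam om k j) \<le> B" and B0: "B \<ge> 0"
  shows "norm (bb a gam om n j) \<le> (2*B)^n * (2*A)^j"
proof (induction n arbitrary: j)
  case 0
  have "norm (bb a gam om 0 j) \<le> A^j" by (rule bb0_bnd[OF rA A0])
  also have "\<dots> \<le> (2*A)^j" by (rule power_mono) (use A0 in auto)
  finally show ?case by simp
next
  case (Suc n)
  have "norm (bb a gam om (Suc n) j) \<le> (\<Sum>l\<le>j. norm (bb a gam om n l * gF gam om n l * qwR a gam (Suc n) l j))"
    by (simp only: bb.simps norm_sum)
  also have "\<dots> \<le> (\<Sum>l\<le>j. ((2*B)^n * (2*A)^l) * B * A^(j-l))"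
    unfolding norm_mult
    by (intro sum_mono mult_mono Suc.IH gB qwR_bnd[OF rA]) (use A0 B0 in auto)
  also have "\<dots> = (2*B)^n * B * (\<Sum>l\<le>j. (2*A)^l * A^(j-l))"
    by (simp add: sum_distrib_left mult_ac)
  also have "\<dots> \<le> (2*B)^n * B * (2*(2*A)^j)"
    by (rule mult_left_mono[OF geo2]) (use A0 B0 in auto)
  also have "\<dots> = (2*B)^(Suc n) * (2*A)^j" by (simp add: mult_ac)
  finally show ?case .
qed



lemma pow_split_le:
  fixes x :: real assumes "0 \<le> x" "x \<le> 1"
  shows "x^(i+m+m') \<le> x^m * x^m'"
proof -
  have "x^(i+m+m') = x^i * (x^m * x^m')" by (simp add: power_add mult_ac)
  also have "\<dots> \<le> 1 * (x^m * x^m')" by (rule mult_right_mono) (use assms in \<open>auto simp: power_le_one\<close>)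
  finally show ?thesis by simp
qed

lemma geom_bound_summable:
  fixes f :: "nat \<Rightarrow> complex"
  assumes "0 \<le> q" "q < 1" "\<And>m. norm (f m) \<le> K * q^m"
  shows "summable f"
proof (rule summable_comparison_test')
  show "summable (\<lambda>m. K * q^m)" using assms by (intro summable_mult summable_geometric) auto
qed (use assms in auto)

lemma lev_sums:
  assumes rA: "\<And>k t. norm (rho a gam k t) \<le> A" and A0: "A \<ge> 0"
    and gB: "\<And>k j. norm (gF gam om k j) \<le> B" and B0: "B \<ge> 0"
    and zq: "2*A*norm z < 1" and z1: "norm z \<le> 1"
  shows "(\<lambda>m. LL a gam om d n i (i+m) * z^(i+m)) sums qwLev a gam om z d n i \<and>
         summable (qwLevTerm a gam om z d n i)"
proof (induction d arbitrary: i)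
  case 0
  have b: "norm (qwLevTerm a gam om z 0 n i m) \<le> 1 * (2*A*norm z)^m" for m
  proof -
    have "norm (qwLevTerm a gam om z 0 n i m) = norm (qwR a gam n i (i+m)) * norm z^(i+m)"
      by (simp add: norm_mult norm_power)
    also have "\<dots> \<le> A^m * (norm z^m * norm z^0)"
      by (rule mult_mono) (use qwR_bnd[OF rA, of n i "i+m"] pow_split_le[of "norm z" i m 0] z1 A0 in auto)
    also have "\<dots> \<le> (2*A)^m * norm z^m"
    proof -
      have "A^m \<le> (2*A)^m" by (rule power_mono) (use A0 in auto)
      thus ?thesis by (simp add: mult_right_mono)
    qed
    finally show ?thesis by (simp add: power_mult_distrib)
  qed
  have s: "summable (qwLevTerm a gam om z 0 n i)"
    by (rule geom_bound_summable[of "2*A*norm z" _ 1]) (use b zq A0 in auto)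
  have eq: "qwLevTerm a gam om z 0 n i = (\<lambda>m. qwR a gam n i (i+m) * z^(i+m))" by (rule ext) simp
  show ?case using summable_sums[OF s] s by (simp add: eq)
next
  case (Suc d)
  define F where "F m m' = qwG a gam om (n - Suc d) i (i+m) * (LL a gam om d n (i+m) (i+m+m') * z^(i+m+m'))" for m m'
  have bnd: "norm (F m m') \<le> (B * (2*B)^d) * (2*A*norm z)^m * (2*A*norm z)^m'" for m m'
  proof -
    have "norm (F m m') \<le> (B * A^m) * ((2*B)^d * (2*A)^m' * (norm z^m * norm z^m'))"
      unfolding F_def norm_mult norm_power
      by (intro mult_mono pow_split_le) (use qwG_bnd[OF rA A0 gB, of "n - Suc d" i "i+m"]
          LL_bnd[OF rA A0 gB B0, of "i+m" "i+m+m'" d n] A0 B0 z1 in auto)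
    also have "\<dots> \<le> (B * (2*A)^m) * ((2*B)^d * (2*A)^m' * (norm z^m * norm z^m'))"
      by (intro mult_mono mult_left_mono power_mono) (use A0 B0 in auto)
    also have "\<dots> = (B * (2*B)^d) * (2*A*norm z)^m * (2*A*norm z)^m'"
      by (simp add: power_mult_distrib mult_ac)
    finally show ?thesis .
  qed
  obtain S where sm: "\<forall>m. summable (F m)" and s1: "(\<lambda>m. suminf (F m)) sums S"
    and s2: "(\<lambda>N. \<Sum>p\<in>(\<lambda>(m,m'). m+m') -` {N}. F (fst p) (snd p)) sums S"
    using double_series[of "2*A*norm z" F, OF _ zq bnd fiber_diag_fin] A0 by auto
  have fm: "suminf (F m) = qwLevTerm a gam om z (Suc d) n i m" for m
  proof -
    have "(\<lambda>m'. LL a gam om d n (i+m) ((i+m)+m') * z^((i+m)+m')) sums qwLev a gam om z d n (i+m)"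
      using Suc.IH by blast
    hence "F m sums (qwG a gam om (n - Suc d) i (i+m) * qwLev a gam om z d n (i+m))"
      unfolding F_def by (intro sums_mult) (simp add: add.assoc)
    thus ?thesis by (simp add: sums_iff)
  qed
  have fm': "(\<lambda>m. suminf (F m)) = qwLevTerm a gam om z (Suc d) n i" by (rule ext) (rule fm)
  have t: "qwLevTerm a gam om z (Suc d) n i sums S" using s1 unfolding fm' .
  have fib: "(\<Sum>p\<in>(\<lambda>(m,m'). m+m') -` {N}. F (fst p) (snd p)) = LL a gam om (Suc d) n i (i+N) * z^(i+N)" for N
  proof -
    have "(\<Sum>p\<in>(\<lambda>(m,m'). m+m') -` {N}. F (fst p) (snd p)) = (\<Sum>m\<le>N. F m (N-m))"
      by (rule fiber_diag_sum)
    also have "\<dots> = (\<Sum>m\<le>N. qwG a gam om (n - Suc d) i (m+i) * LL a gam om d n (m+i) (i+N)) * z^(i+N)"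
      unfolding sum_distrib_right F_def by (intro sum.cong refl) (auto simp: add.commute)
    also have "(\<Sum>m\<le>N. qwG a gam om (n - Suc d) i (m+i) * LL a gam om d n (m+i) (i+N)) =
        LL a gam om (Suc d) n i (i+N)"
    proof -
      have "LL a gam om (Suc d) n i (i+N) = (\<Sum>l\<in>{0+i..N+i}. qwG a gam om (n - Suc d) i l * LL a gam om d n l (i+N))"
        by (simp add: add.commute)
      also have "\<dots> = (\<Sum>m=0..N. qwG a gam om (n - Suc d) i (m+i) * LL a gam om d n (m+i) (i+N))"
        by (rule sum.shift_bounds_cl_nat_ivl)
      finally show ?thesis by (simp add: atLeast0AtMost)
    qed
    finally show ?thesis .
  qed
  have q: "qwLev a gam om z (Suc d) n i = S" using t by (simp add: sums_iff)
  have ss: "(\<lambda>N. LL a gam om (Suc d) n i (i+N) * z^(i+N)) sums S" using s2 unfolding fib .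
  show ?case unfolding q using ss sums_summable[OF t] by (rule conjI)
qed



lemma coeff_sums:
  assumes rA: "\<And>k t. norm (rho a gam k t) \<le> A" and A0: "A \<ge> 0"
    and gB: "\<And>k j. norm (gF gam om k j) \<le> B" and B0: "B \<ge> 0"
    and zq: "2*A*norm z < 1" and z1: "norm z \<le> 1"
  shows "(\<lambda>p. bb a gam om n p * z^p) sums qwCoeff a gam om z n \<and> summable (qwOuterTerm a gam om z n)"
proof (cases n)
  case 0
  have eq: "qwOuterTerm a gam om z 0 = (\<lambda>i. bb a gam om 0 i * z^i)"
    by (rule ext) (simp add: qwOuterTerm_def)
  have b: "norm (bb a gam om 0 i * z^i) \<le> 1 * (2*A*norm z)^i" for i
  proof -
    have "norm (bb a gam om 0 i * z^i) \<le> (2*A)^i * norm z^i"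
      unfolding norm_mult norm_power
      by (rule mult_right_mono) (use bb_bnd[OF rA A0 gB B0, of 0 i] in auto)
    thus ?thesis by (simp add: power_mult_distrib)
  qed
  have s: "summable (\<lambda>i. bb a gam om 0 i * z^i)"
    by (rule geom_bound_summable[of "2*A*norm z" _ 1]) (use b zq A0 in auto)
  show ?thesis using summable_sums[OF s] s 0 by (simp add: eq qwCoeff_def del: bb.simps)
next
  case (Suc n')
  define F where "F i m = qwF0 a gam om i * (LL a gam om n' (Suc n') i (i+m) * z^(i+m))" for i m
  have bnd: "norm (F i m) \<le> (B * (2*B)^n') * (2*A*norm z)^i * (2*A*norm z)^m" for i m
  proof -
    have "norm (F i m) \<le> (B * A^i) * ((2*B)^n' * (2*A)^m * (norm z^i * norm z^m))"
      unfolding F_def norm_mult norm_power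
      by (intro mult_mono) (use F0_bnd[OF rA A0 gB, of i] pow_split_le[of "norm z" 0 i m]
          LL_bnd[OF rA A0 gB B0, of i "i+m" n' "Suc n'"] A0 B0 z1 in auto)
    also have "\<dots> \<le> (B * (2*A)^i) * ((2*B)^n' * (2*A)^m * (norm z^i * norm z^m))"
      by (intro mult_mono mult_left_mono power_mono) (use A0 B0 in auto)
    also have "\<dots> = (B * (2*B)^n') * (2*A*norm z)^i * (2*A*norm z)^m"
      by (simp add: power_mult_distrib mult_ac)
    finally show ?thesis .
  qed
  obtain S where sm: "\<forall>m. summable (F m)" and s1: "(\<lambda>m. suminf (F m)) sums S"
    and s2: "(\<lambda>N. \<Sum>p\<in>(\<lambda>(m,m'). m+m') -` {N}. F (fst p) (snd p)) sums S"
    using double_series[of "2*A*norm z" F, OF _ zq bnd fiber_diag_fin] A0 by auto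
  have fm: "suminf (F i) = qwOuterTerm a gam om z n i" for i
  proof -
    have "(\<lambda>m. LL a gam om n' (Suc n') i (i+m) * z^(i+m)) sums qwLev a gam om z n' (Suc n') i"
      using lev_sums[OF rA A0 gB B0 zq z1] by blast
    hence "F i sums (qwF0 a gam om i * qwLev a gam om z n' (Suc n') i)"
      unfolding F_def by (rule sums_mult)
    thus ?thesis using Suc by (simp add: sums_iff qwOuterTerm_def)
  qed
  have fm': "(\<lambda>m. suminf (F m)) = qwOuterTerm a gam om z n" by (rule ext) (rule fm)
  have t: "qwOuterTerm a gam om z n sums S" using s1 unfolding fm' .
  have fib: "(\<Sum>p\<in>(\<lambda>(m,m'). m+m') -` {N}. F (fst p) (snd p)) = bb a gam om n N * z^N" for N
  proof -
    have "(\<Sum>p\<in>(\<lambda>(m,m'). m+m') -` {N}. F (fst p) (snd p)) = (\<Sum>m\<le>N. F m (N-m))"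
      by (rule fiber_diag_sum)
    also have "\<dots> = (\<Sum>i\<le>N. qwF0 a gam om i * LL a gam om n' (Suc n') i N) * z^N"
      unfolding sum_distrib_right F_def by (intro sum.cong refl) (auto simp: mult_ac)
    also have "\<dots> = bb a gam om n N * z^N" using Suc by (simp only: bb_F0)
    finally show ?thesis .
  qed
  have q: "qwCoeff a gam om z n = S" using t by (simp add: sums_iff qwCoeff_def)
  have ss: "(\<lambda>N. bb a gam om n N * z^N) sums S" using s2 unfolding fib .
  show ?thesis unfolding q using ss sums_summable[OF t] by (rule conjI)
qed



lemma shift_sums:
  fixes f :: "nat \<Rightarrow> complex"
  assumes "(\<lambda>n. f (Suc n)) sums s" and "f 0 = 0"
  shows "f sums s"
  using assms sums_Suc_iff[of f s] by simp

lemma ode_series: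
  fixes c :: "nat \<Rightarrow> complex"
  assumes rec: "\<And>N. of_nat (Suc N) * (of_nat N + \<nu>) * c (Suc N) + \<epsilon>*(of_nat N + \<omega>) * c N
        + (if N = 0 then 0 else (\<mu>*(of_nat N - 1) + \<Omega>) * c (N-1)) = 0"
    and s0: "(\<lambda>n. c n * x^n) sums P0" and s1: "(\<lambda>n. diffs c n * x^n) sums P1"
    and s2: "(\<lambda>n. diffs (diffs c) n * x^n) sums P2"
  shows "x * P2 + (\<mu>*x^2 + \<epsilon>*x + \<nu>) * P1 + (\<Omega>*x + \<epsilon>*\<omega>) * P0 = 0"
proof -
  have a: "(\<lambda>N. of_nat N * of_nat (Suc N) * c (Suc N) * x^N) sums (x * P2)"
    by (rule shift_sums) (use sums_mult[OF s2, of x] in \<open>simp_all add: diffs_def mult_ac\<close>)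
  have b: "(\<lambda>N. of_nat (Suc N) * c (Suc N) * x^N) sums P1" using s1 by (simp add: diffs_def)
  have c: "(\<lambda>N. of_nat N * c N * x^N) sums (x * P1)"
    by (rule shift_sums) (use sums_mult[OF s1, of x] in \<open>simp_all add: diffs_def mult_ac\<close>)
  have d: "(\<lambda>N. (if N = 0 then 0 else of_nat (N-1) * c (N-1)) * x^N) sums (x * (x * P1))"
    by (rule shift_sums) (use sums_mult[OF c, of x] in \<open>simp_all add: mult_ac\<close>)
  have e: "(\<lambda>N. (if N = 0 then 0 else c (N-1)) * x^N) sums (x * P0)"
    by (rule shift_sums) (use sums_mult[OF s0, of x] in \<open>simp_all add: mult_ac\<close>)
  have tot: "(\<lambda>N. of_nat N * of_nat (Suc N) * c (Suc N) * x^N + \<nu> * (of_nat (Suc N) * c (Suc N) * x^N)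
      + \<epsilon> * (of_nat N * c N * x^N) + (\<epsilon>*\<omega>) * (c N * x^N)
      + \<mu> * ((if N = 0 then 0 else of_nat (N-1) * c (N-1)) * x^N)
      + \<Omega> * ((if N = 0 then 0 else c (N-1)) * x^N))
     sums (x * P2 + \<nu> * P1 + \<epsilon> * (x * P1) + (\<epsilon>*\<omega>) * P0 + \<mu> * (x * (x * P1)) + \<Omega> * (x * P0))"
    by (intro sums_add sums_mult a b c d e s0)
  have z: "of_nat N * of_nat (Suc N) * c (Suc N) * x^N + \<nu> * (of_nat (Suc N) * c (Suc N) * x^N)
      + \<epsilon> * (of_nat N * c N * x^N) + (\<epsilon>*\<omega>) * (c N * x^N)
      + \<mu> * ((if N = 0 then 0 else of_nat (N-1) * c (N-1)) * x^N)
      + \<Omega> * ((if N = 0 then 0 else c (N-1)) * x^N) = 0" for N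
  proof -
    have "of_nat N * of_nat (Suc N) * c (Suc N) * x^N + \<nu> * (of_nat (Suc N) * c (Suc N) * x^N)
      + \<epsilon> * (of_nat N * c N * x^N) + (\<epsilon>*\<omega>) * (c N * x^N)
      + \<mu> * ((if N = 0 then 0 else of_nat (N-1) * c (N-1)) * x^N)
      + \<Omega> * ((if N = 0 then 0 else c (N-1)) * x^N) =
      x^N * (of_nat (Suc N) * (of_nat N + \<nu>) * c (Suc N) + \<epsilon>*(of_nat N + \<omega>) * c N
        + (if N = 0 then 0 else (\<mu>*(of_nat N - 1) + \<Omega>) * c (N-1)))"
      by (cases N) (simp_all add: algebra_simps)
    thus ?thesis using rec[of N] by simp
  qed
  have "x * P2 + \<nu> * P1 + \<epsilon> * (x * P1) + (\<epsilon>*\<omega>) * P0 + \<mu> * (x * (x * P1)) + \<Omega> * (x * P0) = 0"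
    using tot unfolding z by (simp add: sums_iff)
  thus ?thesis by (simp add: algebra_simps power2_eq_square)
qed



lemma series_total:
  assumes rA: "\<And>k t. norm (rho a gam k t) \<le> A" and A0: "A \<ge> 0"
    and gB: "\<And>k j. norm (gF gam om k j) \<le> B" and B0: "B \<ge> 0"
    and zq: "2*A*norm z < 1" and z1: "norm z \<le> 1" and eq: "2*B*norm et < 1"
    and hz: "z = al * x^2" and he: "et = be * x"
  shows "summable (\<lambda>n. qwCoeff a gam om z n * et^n) \<and>
         (\<lambda>N. dd a gam om be al N * x^N) sums (\<Sum>n. qwCoeff a gam om z n * et^n)"
proof -
  define q where "q = max (2*A*norm z) (2*B*norm et)"
  have q0: "0 \<le> q" and q1: "q < 1" using zq eq A0 by (auto simp: q_def le_max_iff_disj)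
  define F where "F n j = bb a gam om n j * z^j * et^n" for n j
  have bnd: "norm (F n j) \<le> 1 * q^n * q^j" for n j
  proof -
    have "norm (F n j) \<le> ((2*B)^n * (2*A)^j) * norm z^j * norm et^n"
      unfolding F_def norm_mult norm_power
      by (intro mult_right_mono bb_bnd[OF rA A0 gB B0]) auto
    also have "\<dots> = (2*B*norm et)^n * (2*A*norm z)^j" by (simp add: power_mult_distrib mult_ac)
    also have "\<dots> \<le> q^n * q^j"
      by (intro mult_mono power_mono) (use A0 B0 q0 in \<open>auto simp: q_def\<close>)
    finally show ?thesis by simp
  qed
  obtain S where sm: "\<forall>m. summable (F m)" and s1: "(\<lambda>m. suminf (F m)) sums S"
    and s2: "(\<lambda>N. \<Sum>p\<in>(\<lambda>(n,j). n+2*j) -` {N}. F (fst p) (snd p)) sums S"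
    using double_series[OF q0 q1 bnd fiber2_fin] by blast
  have fm: "suminf (F n) = qwCoeff a gam om z n * et^n" for n
  proof -
    have "(\<lambda>p. bb a gam om n p * z^p) sums qwCoeff a gam om z n"
      using coeff_sums[OF rA A0 gB B0 zq z1] by blast
    hence "F n sums (qwCoeff a gam om z n * et^n)"
      unfolding F_def by (rule sums_mult2)
    thus ?thesis by (simp add: sums_iff)
  qed
  have fm': "(\<lambda>m. suminf (F m)) = (\<lambda>n. qwCoeff a gam om z n * et^n)" by (rule ext) (rule fm)
  have t: "(\<lambda>n. qwCoeff a gam om z n * et^n) sums S" using s1 unfolding fm' .
  have fib: "(\<Sum>p\<in>(\<lambda>(n,j). n+2*j) -` {N}. F (fst p) (snd p)) = dd a gam om be al N * x^N" for N
  proof -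
    have "(\<Sum>p\<in>(\<lambda>(n,j). n+2*j) -` {N}. F (fst p) (snd p)) = (\<Sum>j\<le>N. if 2*j \<le> N then F (N-2*j) j else 0)"
      by (rule fiber2_sum)
    also have "\<dots> = dd a gam om be al N * x^N"
      unfolding dd_def sum_distrib_right
    proof (intro sum.cong refl)
      fix j assume "j \<in> {..N}"
      show "(if 2*j \<le> N then F (N-2*j) j else 0) =
         (if 2*j \<le> N then bb a gam om (N-2*j) j * be^(N-2*j) * al^j else 0) * x^N"
      proof (cases "2*j \<le> N")
        case True
        have "x^N = x^(2*j) * x^(N-2*j)" using True by (simp add: power_add[symmetric])
        thus ?thesis using True by (simp add: F_def hz he power_mult_distrib power_mult[symmetric] mult_ac)
      qed simp
    qed
    finally show ?thesis .
  qed
  have ss: "(\<lambda>N. dd a gam om be al N * x^N) sums S" using s2 unfolding fib .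
  show ?thesis using t ss by (auto simp: sums_iff)
qed



lemma delta_exists:
  fixes \<nu> :: complex
  assumes nu: "\<forall>k::nat. \<nu> \<noteq> - of_nat k"
  shows "\<exists>\<delta>>0. \<forall>m::nat. \<delta> \<le> norm ((1+\<nu>)/2 + (of_nat m - 1)/2)"
proof -
  define h where "h m = norm ((1+\<nu>)/2 + (of_nat m - 1)/2)" for m :: nat
  have hpos: "h m > 0" for m
  proof -
    have e: "(1+\<nu>)/2 + (of_nat m - 1)/2 = (\<nu> + of_nat m)/2" by (simp add: field_simps)
    have "\<nu> + of_nat m \<noteq> 0"
    proof
      assume "\<nu> + of_nat m = 0"
      hence "\<nu> = - of_nat m" by (simp add: eq_neg_iff_add_eq_0)
      thus False using nu by blast
    qed
    thus ?thesis unfolding h_def e by simp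
  qed
  define M where "M = nat \<lceil>norm \<nu>\<rceil> + 2"
  have hbig: "h m \<ge> 1" if "m \<ge> M" for m
  proof -
    have e: "(1+\<nu>)/2 + (of_nat m - 1)/2 = (\<nu> + of_nat m)/2" by (simp add: field_simps)
    have mM: "real m \<ge> norm \<nu> + 2" using that unfolding M_def by linarith
    have "norm (of_nat m :: complex) \<le> norm (\<nu> + of_nat m) + norm \<nu>"
      using norm_triangle_ineq4[of "\<nu> + of_nat m" \<nu>] by simp
    hence "norm (\<nu> + of_nat m) \<ge> real m - norm \<nu>" by simp
    hence "norm (\<nu> + of_nat m) \<ge> 2" using mM by linarith
    thus ?thesis unfolding h_def e by (simp add: norm_divide)
  qed
  define \<delta> where "\<delta> = Min (insert 1 (h ` {..<M}))"
  have "\<delta> > 0" unfolding \<delta>_def using hpos by (subst Min_gr_iff) auto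
  moreover have "\<delta> \<le> h m" for m
  proof (cases "m < M")
    case True thus ?thesis unfolding \<delta>_def by (intro Min_le) auto
  next
    case False
    have "\<delta> \<le> 1" unfolding \<delta>_def by (intro Min_le) auto
    thus ?thesis using hbig[of m] False by linarith
  qed
  ultimately show ?thesis unfolding h_def by blast
qed



theorem mainTheorem1:
  fixes \<mu> \<epsilon> \<nu> \<Omega> \<omega> :: complex
  assumes "\<mu> \<noteq> 0"
    and "\<forall>k::nat. \<nu> \<noteq> - of_nat k"
    and "\<forall>k::nat. (1 + \<nu>) / 2 - \<Omega> / (2 * \<mu>) \<noteq> - of_nat k"
  shows "\<exists>r>0.
    (\<forall>x\<in>ball 0 r. QW_converges (\<Omega> / (2 * \<mu>)) \<omega> ((1 + \<nu>) / 2) (- \<epsilon> * x / 2) (- \<mu> * x\<^sup>2 / 2)) \<and>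
    (\<lambda>x. QW (\<Omega> / (2 * \<mu>)) \<omega> ((1 + \<nu>) / 2) (- \<epsilon> * x / 2) (- \<mu> * x\<^sup>2 / 2)) holomorphic_on ball 0 r \<and>
    (\<forall>x\<in>ball 0 r.
      (let y = (\<lambda>x. QW (\<Omega> / (2 * \<mu>)) \<omega> ((1 + \<nu>) / 2) (- \<epsilon> * x / 2) (- \<mu> * x\<^sup>2 / 2))
       in x * deriv (deriv y) x + (\<mu> * x\<^sup>2 + \<epsilon> * x + \<nu>) * deriv y x + (\<Omega> * x + \<epsilon> * \<omega>) * y x = 0))"
proof -
  define a where "a = \<Omega> / (2 * \<mu>)"
  define gam where "gam = (1 + \<nu>) / 2"
  define be where "be = - \<epsilon> / 2"
  define al where "al = - \<mu> / 2"
  obtain \<delta> where d: "\<delta> > 0" and hd: "\<And>m::nat. \<delta> \<le> norm (gam + (of_nat m - 1)/2)"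
    using delta_exists[OF assms(2)] unfolding gam_def by blast
  define A where "A = (norm a + 1)/\<delta>"
  define B where "B = (norm \<omega> + 1)/\<delta>"
  have A0: "A \<ge> 0" and B0: "B \<ge> 0" using d by (auto simp: A_def B_def)
  have rA: "\<And>k t. norm (rho a gam k t) \<le> A" unfolding A_def by (rule rho_bnd[OF d hd])
  have gB: "\<And>k j. norm (gF gam \<omega> k j) \<le> B" unfolding B_def by (rule gF_bnd[OF d hd])
  have p1: "A * norm \<mu> \<ge> 0" and p2: "B * norm \<epsilon> \<ge> 0" using A0 B0 by auto
  define D where "D = 1 + A * norm \<mu> + B * norm \<epsilon> + norm \<mu>"
  have D1: "D \<ge> 1" using A0 B0 by (simp add: D_def)
  define r where "r = 1 / D"
  have r0: "r > 0" and r1: "r \<le> 1" using D1 by (auto simp: r_def)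
  have rD: "c * r < 1" if "0 \<le> c" "c < D" for c
  proof -
    have "c * r = c / D" by (simp add: r_def)
    also have "\<dots> < 1" using that D1 by (simp add: divide_less_eq)
    finally show ?thesis .
  qed
  define c where "c = dd a gam \<omega> be al"
  define y where "y = (\<lambda>x. QW a \<omega> gam (- \<epsilon> * x / 2) (- \<mu> * x\<^sup>2 / 2))"
  define C where "C = Gamma (gam - a) / Gamma gam"
  have key: "QW_converges a \<omega> gam (- \<epsilon> * x / 2) (- \<mu> * x\<^sup>2 / 2) \<and>
             (\<lambda>N. c N * x^N) sums (\<Sum>n. qwCoeff a gam \<omega> (- \<mu> * x\<^sup>2 / 2) n * (- \<epsilon> * x / 2)^n) \<and>
             y x = C * (\<Sum>n. qwCoeff a gam \<omega> (- \<mu> * x\<^sup>2 / 2) n * (- \<epsilon> * x / 2)^n)"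
    if x: "x \<in> ball 0 r" for x
  proof -
    define z where "z = - \<mu> * x\<^sup>2 / 2"
    define et where "et = - \<epsilon> * x / 2"
    have nx: "norm x < r" using x by simp
    have nx1: "norm x \<le> 1" using nx r1 by simp
    have nx2: "norm x ^ 2 \<le> norm x" using nx1 by (simp add: power2_eq_square mult_left_le)
    have nz: "norm z = norm \<mu> * norm x ^ 2 / 2" by (simp add: z_def norm_mult norm_power norm_divide)
    have ne: "norm et = norm \<epsilon> * norm x / 2" by (simp add: et_def norm_mult norm_divide)
    have zq: "2*A*norm z < 1"
    proof -
      have "2*A*norm z \<le> (A * norm \<mu>) * r"
      proof -
        have "2*A*norm z = (A * norm \<mu>) * norm x ^ 2" by (simp add: nz)
        also have "\<dots> \<le> (A * norm \<mu>) * r" using nx2 nx A0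
          by (intro mult_left_mono) auto
        finally show ?thesis .
      qed
      also have "\<dots> < 1" by (rule rD, insert p1 p2 norm_ge_zero[of \<mu>], unfold D_def, linarith+)
      finally show ?thesis .
    qed
    have z1: "norm z \<le> 1"
    proof -
      have h1: "norm \<mu> * norm x^2 \<le> norm \<mu> * r" by (intro mult_left_mono) (use nx2 nx in auto)
      have h2: "0 \<le> norm \<mu> * norm x^2" by simp
      have "norm z \<le> norm \<mu> * r" unfolding nz using h1 h2 by linarith
      also have "\<dots> < 1" by (rule rD, insert p1 p2 norm_ge_zero[of \<mu>], unfold D_def, linarith+)
      finally show ?thesis by simp
    qed
    have eq: "2*B*norm et < 1"
    proof -
      have "2*B*norm et = (B * norm \<epsilon>) * norm x" by (simp add: ne)
      also have "\<dots> \<le> (B * norm \<epsilon>) * r" using nx B0 by (intro mult_left_mono) auto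
      also have "\<dots> < 1" by (rule rD, insert p1 p2 norm_ge_zero[of \<mu>], unfold D_def, linarith+)
      finally show ?thesis .
    qed
    have hz: "z = al * x^2" by (simp add: z_def al_def)
    have he: "et = be * x" by (simp add: et_def be_def)
    have T: "summable (\<lambda>n. qwCoeff a gam \<omega> z n * et^n) \<and>
         (\<lambda>N. dd a gam \<omega> be al N * x^N) sums (\<Sum>n. qwCoeff a gam \<omega> z n * et^n)"
      by (rule series_total[OF rA A0 gB B0 zq z1 eq hz he])
    have lev: "\<forall>n d i. d < n \<longrightarrow> summable (qwLevTerm a gam \<omega> z d n i)"
      using lev_sums[OF rA A0 gB B0 zq z1] by blast
    have out: "\<forall>n. summable (qwOuterTerm a gam \<omega> z n)"
      using coeff_sums[OF rA A0 gB B0 zq z1] by blast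
    have conv: "QW_converges a \<omega> gam et z" unfolding QW_converges_def using lev out T by blast
    have yx: "y x = C * (\<Sum>n. qwCoeff a gam \<omega> z n * et^n)"
      by (simp add: y_def QW_def C_def z_def et_def)
    show ?thesis using conv T yx unfolding c_def z_def et_def by blast
  qed
  have Dc: "of_nat j + of_nat n / 2 + gam - 1 \<noteq> 0" if h: "1 \<le> n + 2*j" for n j
  proof -
    obtain k where k: "2*j + n = Suc k" using h by (cases "2*j+n") simp_all
    have "of_nat (2*j + n) = (of_nat (Suc k) :: complex)" using k by simp
    hence "2 * of_nat j + of_nat n = (of_nat k + 1 :: complex)" by simp
    hence e: "of_nat j + of_nat n / 2 + gam - 1 = gam + (of_nat k - 1)/2"
      by (simp add: field_simps)
    have "norm (gam + (of_nat k - 1)/2) > 0" using hd[of k] d by linarith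
    thus ?thesis unfolding e by auto
  qed
  have rec: "of_nat (Suc N) * (of_nat N + \<nu>) * c (Suc N) + \<epsilon>*(of_nat N + \<omega>) * c N
        + (if N = 0 then 0 else (\<mu>*(of_nat N - 1) + \<Omega>) * c (N-1)) = 0" for N
  proof -
    have e1: "of_nat N + 2*gam - 1 = of_nat N + \<nu>" by (simp add: gam_def field_simps)
    have e2: "-2*be = \<epsilon>" by (simp add: be_def)
    have e3: "(-2*al)*(of_nat N - 1 + 2*a) = \<mu>*(of_nat N - 1) + \<Omega>"
      using assms(1) by (simp add: al_def a_def field_simps)
    show ?thesis using dd_rec[where gam=gam and a=a and om=\<omega> and be=be and al=al and N=N, OF Dc] unfolding c_def e1 e2 e3 .
  qed
  have sumP: "summable (\<lambda>n. c n * w^n)" if "norm w < r" for w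
    using key[of w] that by (auto dest: sums_summable)
  define P where "P w = (\<Sum>n. c n * w^n)" for w
  define P1 where "P1 w = (\<Sum>n. diffs c n * w^n)" for w
  define P2 where "P2 w = (\<Sum>n. diffs (diffs c) n * w^n)" for w
  have yP: "y w = C * P w" if "w \<in> ball 0 r" for w
    using key[OF that] unfolding P_def by (simp add: sums_iff)
  have dP: "(P has_field_derivative P1 w) (at w)" if "norm w < r" for w
    unfolding P_def[abs_def] P1_def by (rule termdiffs_strong'[OF sumP that])
  have sumP1: "summable (\<lambda>n. diffs c n * w^n)" if "norm w < r" for w
    by (rule termdiff_converges[OF that sumP])
  have dP1: "(P1 has_field_derivative P2 w) (at w)" if "norm w < r" for w
    unfolding P1_def[abs_def] P2_def by (rule termdiffs_strong'[OF sumP1 that])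
  have sumP2: "summable (\<lambda>n. diffs (diffs c) n * w^n)" if "norm w < r" for w
    by (rule termdiff_converges[OF that sumP1])
  have dy: "(y has_field_derivative C * P1 w) (at w)" if w: "w \<in> ball 0 r" for w
  proof (rule has_field_derivative_transform_within_open[OF DERIV_cmult[OF dP] open_ball w])
    show "norm w < r" using w by simp
    show "C * P v = y v" if "v \<in> ball 0 r" for v using yP[OF that] by simp
  qed
  have dy': "deriv y w = C * P1 w" if w: "w \<in> ball 0 r" for w
    using DERIV_imp_deriv[OF dy[OF w]] .
  have ddy: "(deriv y has_field_derivative C * P2 w) (at w)" if w: "w \<in> ball 0 r" for w
  proof (rule has_field_derivative_transform_within_open[OF DERIV_cmult[OF dP1] open_ball w])
    show "norm w < r" using w by simp
    show "C * P1 v = deriv y v" if "v \<in> ball 0 r" for v using dy'[OF that] by simp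
  qed
  have ddy': "deriv (deriv y) w = C * P2 w" if w: "w \<in> ball 0 r" for w
    using DERIV_imp_deriv[OF ddy[OF w]] .
  have hol: "y holomorphic_on ball 0 r"
    unfolding holomorphic_on_open[OF open_ball] using dy by blast
  have ode: "x * deriv (deriv y) x + (\<mu> * x\<^sup>2 + \<epsilon> * x + \<nu>) * deriv y x + (\<Omega> * x + \<epsilon> * \<omega>) * y x = 0"
    if x: "x \<in> ball 0 r" for x
  proof -
    have nx: "norm x < r" using x by simp
    have "x * P2 x + (\<mu>*x^2 + \<epsilon>*x + \<nu>) * P1 x + (\<Omega>*x + \<epsilon>*\<omega>) * P x = 0"
      by (rule ode_series[OF rec]) (use sumP[OF nx] sumP1[OF nx] sumP2[OF nx] in
          \<open>auto simp: P_def P1_def P2_def intro: summable_sums\<close>)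
    hence "C * (x * P2 x + (\<mu>*x^2 + \<epsilon>*x + \<nu>) * P1 x + (\<Omega>*x + \<epsilon>*\<omega>) * P x) = 0" by simp
    thus ?thesis using ddy'[OF x] dy'[OF x] yP[OF x] by (simp add: algebra_simps)
  qed
  have main: "\<exists>r>0. (\<forall>x\<in>ball 0 r. QW_converges a \<omega> gam (- \<epsilon> * x / 2) (- \<mu> * x\<^sup>2 / 2)) \<and>
     y holomorphic_on ball 0 r \<and>
     (\<forall>x\<in>ball 0 r. x * deriv (deriv y) x + (\<mu> * x\<^sup>2 + \<epsilon> * x + \<nu>) * deriv y x + (\<Omega> * x + \<epsilon> * \<omega>) * y x = 0)"
    using r0 key hol ode by blast
  show ?thesis using main unfolding y_def a_def gam_def Let_def .
qed

end
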